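(* Let $S\subset\mathbb{E}^d$ be a compact set such that $\operatorname{cl}(\operatorname{int} S)=S$ and $\operatorname{int} S$ is connected. Assume that $x\in S$ is a spindle peak of $S$. Then $x\in\ker_{\mathrm{s}} S$ (in particular, $S$ is spindle starshaped).
   Context: For $x,y\in\mathbb{E}^d$ the spindle $[x,y]_{\mathrm{s}}$ is the intersection of all closed unit balls containing $x$ and $y$ if $|x-y|\le2$, and $\mathbb{E}^d$ otherwise. For $p\in S$, $\operatorname{st}_{\mathrm{s}}(p)=\operatorname{st}_{\mathrm{s}}(p,S)=\{q\in S:[p,q]_{\mathrm{s}}\subseteq S\}$; $\ker_{\mathrm{s}}S=\{p\in S:\operatorname{st}_{\mathrm{s}}(p,S)=S\}$; $S$ is spindle starshaped if $\ker_{\mathrm{s}}S\ne\emptyset$. A point $x\in S$ is a spindle peak of $S$ if there is a neighborhood $U$ of $x$ such that $\operatorname{st}_{\mathrm{s}}(x',S)\subseteq\operatorname{st}_{\mathrm{s}}(x,S)$ for every $x'\in U\cap S$. *)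

theory Defs
  imports "HOL-Analysis.Analysis"
begin

definition spindle :: "'a::euclidean_space \<Rightarrow> 'a \<Rightarrow> 'a set" where
  "spindle x y = (if dist x y \<le> 2
     then \<Inter> {cball c 1 | c. x \<in> cball c 1 \<and> y \<in> cball c 1}
     else UNIV)"

definition spindle_star :: "'a::euclidean_space \<Rightarrow> 'a set \<Rightarrow> 'a set" where
  "spindle_star p S = {q \<in> S. spindle p q \<subseteq> S}"

definition spindle_kernel :: "'a::euclidean_space set \<Rightarrow> 'a set" where
  "spindle_kernel S = {p \<in> S. spindle_star p S = S}"

definition spindle_starshaped :: "'a::euclidean_space set \<Rightarrow> bool" where
  "spindle_starshaped S \<longleftrightarrow> spindle_kernel S \<noteq> {}"

definition spindle_peak :: "'a::euclidean_space \<Rightarrow> 'a set \<Rightarrow> bool" where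
  "spindle_peak x S \<longleftrightarrow> x \<in> S \<and>
     (\<exists>U. open U \<and> x \<in> U \<and> (\<forall>x' \<in> U \<inter> S. spindle_star x' S \<subseteq> spindle_star x S))"

end

theory Submission
  imports Defs
begin


lemma spindle_mem:
  assumes "dist p q \<le> 2"
  shows "w \<in> spindle p q \<longleftrightarrow> (\<forall>c. dist c p \<le> 1 \<longrightarrow> dist c q \<le> 1 \<longrightarrow> dist c w \<le> 1)"
  using assms unfolding spindle_def by (auto simp: mem_cball)

lemma spindle_far: "dist p q > 2 \<Longrightarrow> spindle p q = UNIV"
  unfolding spindle_def by auto

lemma spindle_sub_dist:
  fixes S :: "'a::euclidean_space set"
  assumes "bounded S" "spindle p q \<subseteq> S" shows "dist p q \<le> 2"
proof (rule ccontr)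
  assume "\<not> dist p q \<le> 2"
  then have "UNIV \<subseteq> S" using assms spindle_far[of q p] by (simp add: spindle_far)
  then show False using assms(1) not_bounded_UNIV bounded_subset by blast
qed

lemma norm_comb_sq:
  fixes a b :: "'a::real_inner"
  shows "(norm ((1-s) *\<^sub>R a + s *\<^sub>R b))^2 = (1-s)*(norm a)^2 + s*(norm b)^2 - s*(1-s)*(norm (a-b))^2"
  unfolding power2_norm_eq_inner by (simp add: inner_simps inner_commute algebra_simps)

lemma spindle_refl: "spindle p p = {p::'a::euclidean_space}"
proof -
  have "w = p" if "w \<in> spindle p p" for w
  proof (rule ccontr)
    assume ne: "w \<noteq> p"
    define c where "c = p - (1 / norm (w - p)) *\<^sub>R (w - p)"
    have n: "norm (w - p) > 0" using ne by simp
    have "dist c p = 1" using n by (simp add: c_def dist_norm)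
    moreover have "dist c w = 1 + norm (w - p)"
    proof -
      have "c - w = - ((1 + 1/norm (w-p)) *\<^sub>R (w - p))" by (simp add: c_def algebra_simps)
      then have "norm (c - w) = (1 + 1/norm (w-p)) * norm (w-p)"
        using n by (simp add: add_pos_pos)
      then show ?thesis using n by (simp add: dist_norm field_simps)
    qed
    have "\<forall>c. dist c p \<le> 1 \<longrightarrow> dist c w \<le> 1" using that spindle_mem[of p p w] by simp
    then have "dist c w \<le> 1" using \<open>dist c p = 1\<close> by simp
    then show False using \<open>dist c w = 1 + norm (w - p)\<close> n by linarith
  qed
  moreover have "p \<in> spindle p p" by (simp add: spindle_mem)
  ultimately show ?thesis by auto
qed

lemma spindle_translate:
  fixes p q :: "'a::euclidean_space"
  assumes "w \<in> spindle (p+v) (q+v)" "dist p q \<le> 2"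
  shows "w - v \<in> spindle p q"
proof -
  have d: "dist (p+v) (q+v) \<le> 2" using assms by (simp add: dist_norm)
  show ?thesis unfolding spindle_mem[OF assms(2)]
  proof (intro allI impI)
    fix c assume "dist c p \<le> 1" "dist c q \<le> 1"
    then have "dist (c+v) (p+v) \<le> 1" "dist (c+v) (q+v) \<le> 1" by (simp_all add: dist_norm)
    then have "dist (c+v) w \<le> 1" using assms(1) spindle_mem[OF d] by blast
    then show "dist c (w - v) \<le> 1" by (simp add: dist_norm algebra_simps)
  qed
qed

lemma comb_lt:
  fixes c p q :: "'a::euclidean_space"
  assumes "dist c p \<le> 1" "dist c q \<le> 1" "p \<noteq> q" "0 < s" "s < 1"
  shows "dist c ((1-s) *\<^sub>R p + s *\<^sub>R q) < 1"
proof -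
  have e: "c - ((1-s) *\<^sub>R p + s *\<^sub>R q) = (1-s) *\<^sub>R (c - p) + s *\<^sub>R (c - q)"
    by (simp add: algebra_simps)
  have "(dist c ((1-s) *\<^sub>R p + s *\<^sub>R q))^2 = (1-s)*(norm (c-p))^2 + s*(norm (c-q))^2 - s*(1-s)*(norm ((c-p)-(c-q)))^2"
    unfolding dist_norm e by (rule norm_comb_sq)
  also have "\<dots> < 1"
  proof -
    have "(norm (c-p))^2 \<le> 1" "(norm (c-q))^2 \<le> 1" using assms
      by (auto simp: dist_norm power_le_one)
    moreover have "(norm ((c-p)-(c-q)))^2 > 0" using assms by simp
    moreover have "s*(1-s) > 0" using assms by simp
    ultimately have "(1-s)*(norm (c-p))^2 \<le> (1-s)" "s*(norm (c-q))^2 \<le> s"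
      "s*(1-s)*(norm ((c-p)-(c-q)))^2 > 0"
      using assms by (auto intro!: mult_left_le)
    then show ?thesis by linarith
  qed
  finally show ?thesis by (simp add: power_less_one_iff abs_less_iff)
qed



lemma spindle_inner_strict:
  fixes p q w c :: "'a::euclidean_space"
  assumes pq: "p \<noteq> q" "dist p q \<le> 2" and s: "0<s" "s<1"
    and w: "w \<in> spindle ((1-s) *\<^sub>R p + s *\<^sub>R q) q" "w \<noteq> q"
    and c: "dist c p \<le> 1" "dist c q \<le> 1"
  shows "dist c w < 1"
proof -
  define y where "y = (1-s) *\<^sub>R p + s *\<^sub>R q"
  have "y - q = (1-s) *\<^sub>R (p - q)" by (simp add: y_def algebra_simps)
  then have "dist y q = (1-s) * dist p q" using s by (simp add: dist_norm)
  also have "\<dots> \<le> 1 * 2" using s pq by (intro mult_mono) auto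
  finally have dy: "dist y q \<le> 2" by simp
  have cy: "dist c y < 1" unfolding y_def by (rule comb_lt) (use c pq s in auto)
  have le: "dist c w \<le> 1" using spindle_mem[OF dy] w c cy unfolding y_def[symmetric] by auto
  show ?thesis
  proof (rule ccontr)
    assume "\<not> dist c w < 1"
    then have eq: "norm (c - w) = 1" using le by (simp add: dist_norm)
    define u where "u = q - w"
    have nu: "norm u > 0" using w by (simp add: u_def)
    define \<eta> where "\<eta> = min (1/2) ((1 - dist c y) / norm u)"
    have \<eta>pos: "\<eta> > 0" using nu cy by (simp add: \<eta>_def)
    have \<eta>le: "\<eta> \<le> 1/2" unfolding \<eta>_def by (rule min.cobounded1)
    have \<eta>u: "\<eta> * norm u \<le> 1 - dist c y"
      using nu by (simp add: \<eta>_def min_def field_simps split: if_splits)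
    define c' where "c' = c + \<eta> *\<^sub>R u"
    have "dist c' y \<le> dist c y + dist c' c" using dist_triangle[of c' y c] by linarith
    also have "dist c' c = \<eta> * norm u" using \<eta>pos by (simp add: c'_def dist_norm)
    finally have c'y: "dist c' y \<le> 1" using \<eta>u by linarith
    define a where "a = c - q"
    have e1: "c - w = a + u" by (simp add: a_def u_def)
    have e2: "c' - q = a + \<eta> *\<^sub>R u" by (simp add: a_def c'_def)
    have e3: "c' - w = a + (1 + \<eta>) *\<^sub>R u" by (simp add: a_def u_def c'_def algebra_simps)
    define A where "A = (norm a)^2"
    define I where "I = inner a u"
    define N where "N = (norm u)^2"
    have A1: "A \<le> 1" using c by (simp add: A_def a_def dist_norm power_le_one)
    have Npos: "N > 0" using nu by (simp add: N_def)
    have "(norm (c - w))^2 = A + 2*I + N" unfolding e1 A_def I_def N_def power2_norm_eq_inner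
      by (simp add: inner_simps inner_commute)
    then have h1: "A + 2*I + N = 1" using eq by simp
    have h2: "(norm (c' - q))^2 = A + 2*\<eta>*I + \<eta>^2*N" unfolding e2 A_def I_def N_def power2_norm_eq_inner
      by (simp add: inner_simps inner_commute power2_eq_square algebra_simps)
    have h3: "(norm (c' - w))^2 = A + 2*(1+\<eta>)*I + (1+\<eta>)^2*N" unfolding e3 A_def I_def N_def power2_norm_eq_inner
      by (simp add: inner_simps inner_commute power2_eq_square algebra_simps)
    have I2: "2*I = 1 - A - N" using h1 by linarith
    have "A + 2*\<eta>*I + \<eta>^2*N = A + \<eta>*(2*I) + \<eta>^2*N" by simp
    also have "\<dots> = A + \<eta>*(1 - A - N) + \<eta>^2*N" by (simp only: I2)
    also have "\<dots> = (1-\<eta>)*A + \<eta> - \<eta>*(1-\<eta>)*N" by (simp add: power2_eq_square algebra_simps)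
    also have "\<dots> \<le> 1"
    proof -
      have "(1-\<eta>)*A \<le> 1-\<eta>" using A1 \<eta>le by (simp add: mult_left_le)
      moreover have "\<eta>*(1-\<eta>)*N \<ge> 0" using \<eta>pos \<eta>le Npos by simp
      ultimately show ?thesis by linarith
    qed
    finally have "(norm (c' - q))^2 \<le> 1" using h2 by simp
    then have c'q: "dist c' q \<le> 1" by (simp add: dist_norm power_le_one_iff)
    have "A + 2*(1+\<eta>)*I + (1+\<eta>)^2*N = (A + 2*I + N) + \<eta>*(2*I) + 2*\<eta>*N + \<eta>^2*N"
      by (simp add: power2_eq_square algebra_simps)
    also have "\<dots> = 1 + \<eta>*(1 - A - N) + 2*\<eta>*N + \<eta>^2*N" by (simp only: I2 h1)
    also have "\<dots> = 1 + \<eta>*(1 - A + N) + \<eta>^2*N" by (simp add: algebra_simps)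
    also have "\<dots> > 1"
    proof -
      have "\<eta>*(1 - A + N) > 0" using \<eta>pos A1 Npos by simp
      moreover have "\<eta>^2*N \<ge> 0" using Npos by simp
      ultimately show ?thesis by linarith
    qed
    finally have "(norm (c' - w))^2 > 1" using h3 by simp
    then have c'w: "dist c' w > 1" by (simp add: dist_norm power_less_one_iff less_le_not_le one_less_power abs_of_nonneg)
      (smt (verit) norm_ge_zero power_le_one)
    have "dist c' w \<le> 1" using spindle_mem[OF dy] w c'q c'y unfolding y_def[symmetric] by auto
    then show False using c'w by simp
  qed
qed

lemma spindle_inner_ball:
  fixes p q w :: "'a::euclidean_space"
  assumes pq: "p \<noteq> q" "dist p q \<le> 2" and s: "0<s" "s<1"
    and w: "w \<in> spindle ((1-s) *\<^sub>R p + s *\<^sub>R q) q" "w \<noteq> q"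
  shows "\<exists>\<delta>>0. ball w \<delta> \<subseteq> spindle p q"
proof -
  define C where "C = cball p 1 \<inter> cball q (1::real)"
  have cC: "compact C" by (simp add: C_def compact_Int)
  have m1: "dist p (midpoint p q) = dist p q / 2" by (rule dist_midpoint(1))
  have m2: "dist q (midpoint p q) = dist p q / 2" by (rule dist_midpoint(2))
  have "dist p (midpoint p q) \<le> 1" "dist q (midpoint p q) \<le> 1"
    using m1 m2 pq(2) by simp_all
  then have "midpoint p q \<in> C" by (simp add: C_def mem_cball)
  then have neC: "C \<noteq> {}" by auto
  have "continuous_on C (\<lambda>c. dist c w)" by (intro continuous_intros)
  then obtain c0 where c0: "c0 \<in> C" "\<forall>c\<in>C. dist c w \<le> dist c0 w"
    using continuous_attains_sup[OF cC neC, of "\<lambda>c. dist c w"] by auto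
  have M: "dist c0 w < 1"
    using c0(1) spindle_inner_strict[OF pq s w] by (simp add: C_def mem_cball dist_commute)
  show ?thesis
  proof (intro exI conjI)
    show "1 - dist c0 w > 0" using M by simp
    show "ball w (1 - dist c0 w) \<subseteq> spindle p q"
    proof
      fix u assume u: "u \<in> ball w (1 - dist c0 w)"
      show "u \<in> spindle p q" unfolding spindle_mem[OF pq(2)]
      proof (intro allI impI)
        fix c assume "dist c p \<le> 1" "dist c q \<le> 1"
        then have "c \<in> C" by (simp add: C_def mem_cball dist_commute)
        then have "dist c w \<le> dist c0 w" using c0 by auto
        moreover have "dist c u \<le> dist c w + dist w u" by (rule dist_triangle)
        ultimately show "dist c u \<le> 1" using u by (simp add: mem_ball)
      qed
    qed
  qed
qed

lemma spindle_lsc: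
  fixes p q w :: "'a::euclidean_space"
  assumes "dist p q \<le> 2" and st: "\<forall>c. dist c p \<le> 1 \<longrightarrow> dist c q \<le> 1 \<longrightarrow> dist c w < 1"
  shows "\<exists>e>0. \<forall>q'. dist q q' < e \<longrightarrow> w \<in> spindle p q'"
proof -
  define D where "D = cball p 1 - ball w (1::real)"
  have cD: "compact D" by (simp add: D_def compact_diff)
  have pos: "dist c q > 1" if "c \<in> D" for c
    using that st by (force simp: D_def mem_cball mem_ball dist_commute)
  have key: "w \<in> spindle p q'" if "\<forall>c\<in>D. dist c q' > 1" for q'
  proof (cases "dist p q' \<le> 2")
    case True
    show ?thesis unfolding spindle_mem[OF True]
    proof (intro allI impI)
      fix c assume "dist c p \<le> 1" "dist c q' \<le> 1"
      then have "c \<notin> D" using that by force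
      then show "dist c w \<le> 1" using \<open>dist c p \<le> 1\<close> by (simp add: D_def mem_cball mem_ball dist_commute)
    qed
  next
    case False then show ?thesis by (simp add: spindle_far)
  qed
  show ?thesis
  proof (cases "D = {}")
    case True then show ?thesis using key by (intro exI[of _ 1]) auto
  next
    case False
    have "continuous_on D (\<lambda>c. dist c q)" by (intro continuous_intros)
    then obtain c0 where c0: "c0 \<in> D" "\<forall>c\<in>D. dist c0 q \<le> dist c q"
      using continuous_attains_inf[OF cD False, of "\<lambda>c. dist c q"] by auto
    show ?thesis
    proof (intro exI conjI allI impI)
      show "dist c0 q - 1 > 0" using pos c0 by simp
      fix q' assume q': "dist q q' < dist c0 q - 1"
      have "\<forall>c\<in>D. dist c q' > 1"
      proof
        fix c assume "c \<in> D"
        then have "dist c0 q \<le> dist c q" using c0 by auto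
        moreover have "dist c q \<le> dist c q' + dist q' q" by (rule dist_triangle)
        ultimately show "dist c q' > 1" using q' by (simp add: dist_commute)
      qed
      then show "w \<in> spindle p q'" by (rule key)
    qed
  qed
qed



lemma spindle_closed: "closed (spindle p (q::'a::euclidean_space))"
  unfolding spindle_def by (auto intro!: closed_Inter)

lemma spindle_endpoints:
  assumes "dist p q \<le> 2" shows "p \<in> spindle p q" "q \<in> spindle p q"
  using assms by (auto simp: spindle_mem)

lemma star_closed:
  fixes S :: "'a::euclidean_space set"
  assumes cS: "compact S"
  shows "closed (spindle_star x S)"
proof -
  have clS: "closed S" and bS: "bounded S" using cS by (auto simp: compact_eq_bounded_closed)
  let ?T = "spindle_star x S"
  have TS: "?T \<subseteq> S" by (auto simp: spindle_star_def)
  have "z \<in> ?T" if z: "z \<in> closure ?T" for z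
  proof -
    have app: "\<forall>e>0. \<exists>z'\<in>?T. dist z' z < e" using z closure_approachable by blast
    have zS: "z \<in> S" using z closure_mono[OF TS] clS closure_closed by blast
    have d2: "dist x z \<le> 2"
    proof (rule ccontr)
      assume "\<not> dist x z \<le> 2"
      then have "dist x z - 2 > 0" by simp
      then have "\<exists>z'\<in>?T. dist z' z < dist x z - 2" using app by blast
      then obtain z' where z': "z' \<in> ?T" "dist z' z < dist x z - 2" by blast
      have "dist x z \<le> dist x z' + dist z' z" by (rule dist_triangle)
      then have "dist x z' > 2" using z' by linarith
      moreover have "spindle x z' \<subseteq> S" using z' by (simp add: spindle_star_def)
      ultimately show False using spindle_sub_dist[OF bS] by force
    qed
    have "spindle x z \<subseteq> S"
    proof
      fix w assume w: "w \<in> spindle x z"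
      show "w \<in> S"
      proof (cases "x = z")
        case True then show ?thesis using w zS by (simp add: spindle_refl)
      next
        case ne: False
        define m where "m = (1 - 1/2) *\<^sub>R x + (1/2::real) *\<^sub>R z"
        have "w \<in> closure S" unfolding closure_approachable
        proof (intro allI impI)
          fix \<epsilon> :: real assume \<epsilon>: "\<epsilon> > 0"
          define t where "t = min 1 (\<epsilon> / (2 * (norm (m - w) + 1)))"
          have pp: "2 * (norm (m - w) + 1) > 0" by (smt (verit) norm_ge_zero)
          have t0: "t > 0" using \<epsilon> pp unfolding t_def by simp
          have t1: "t \<le> 1" unfolding t_def by (rule min.cobounded1)
          define w' where "w' = (1-t) *\<^sub>R w + t *\<^sub>R m"
          have "w' - w = t *\<^sub>R (m - w)" by (simp add: w'_def algebra_simps)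
          then have "dist w' w = t * norm (m - w)" using t0 by (simp add: dist_norm)
          also have "\<dots> \<le> (\<epsilon> / (2 * (norm (m - w) + 1))) * norm (m - w)"
            by (intro mult_right_mono) (simp_all add: t_def)
          also have "\<dots> < \<epsilon>"
          proof -
            have "(\<epsilon> / (2 * (norm (m - w) + 1))) * norm (m - w) = \<epsilon> * (norm (m - w) / (2 * (norm (m - w) + 1)))"
              by simp
            also have "\<dots> < \<epsilon> * 1"
            proof (rule mult_strict_left_mono[OF _ \<epsilon>])
              have "norm (m - w) < 2 * (norm (m - w) + 1)" by (smt (verit) norm_ge_zero)
              then show "norm (m - w) / (2 * (norm (m - w) + 1)) < 1"
                using pp by (subst divide_less_eq_1_pos) simp_all
            qed
            finally show ?thesis by simp
          qed
          finally have dw: "dist w' w < \<epsilon>" .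
          have strict: "\<forall>c. dist c x \<le> 1 \<longrightarrow> dist c z \<le> 1 \<longrightarrow> dist c w' < 1"
          proof (intro allI impI)
            fix c assume c: "dist c x \<le> 1" "dist c z \<le> 1"
            have cm: "dist c m < 1" unfolding m_def by (rule comb_lt) (use c ne in auto)
            have cw: "dist c w \<le> 1" using w c spindle_mem[OF d2] by auto
            have "c - w' = (1-t) *\<^sub>R (c - w) + t *\<^sub>R (c - m)" by (simp add: w'_def algebra_simps)
            then have "dist c w' = norm ((1-t) *\<^sub>R (c - w) + t *\<^sub>R (c - m))" by (simp add: dist_norm)
            also have "\<dots> \<le> norm ((1-t) *\<^sub>R (c - w)) + norm (t *\<^sub>R (c - m))" by (rule norm_triangle_ineq)
            also have "\<dots> = (1-t) * dist c w + t * dist c m" using t0 t1 by (simp add: dist_norm)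
            also have "\<dots> < (1-t) * 1 + t * 1"
            proof -
              have "(1-t) * dist c w \<le> (1-t) * 1" using t1 cw by (intro mult_left_mono) simp_all
              moreover have "t * dist c m < t * 1" using t0 cm by (intro mult_strict_left_mono) simp_all
              ultimately show ?thesis by linarith
            qed
            finally show "dist c w' < 1" by simp
          qed
          obtain e where e: "e > 0" "\<forall>q'. dist z q' < e \<longrightarrow> w' \<in> spindle x q'"
            using spindle_lsc[OF d2 strict] by auto
          obtain z' where z': "z' \<in> ?T" "dist z' z < e" using app e(1) by blast
          have "w' \<in> spindle x z'" using e z' by (simp add: dist_commute)
          then have "w' \<in> S" using z' by (auto simp: spindle_star_def)
          then show "\<exists>y\<in>S. dist y w < \<epsilon>" using dw by blast
        qed
        then show ?thesis using clS by simp
      qed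
    qed
    then show ?thesis using zS by (simp add: spindle_star_def)
  qed
  then have "closure ?T \<subseteq> ?T" by blast
  then show ?thesis by (simp add: closure_subset_eq)
qed



theorem theorem4:
  fixes S :: "'a::euclidean_space set" and x :: 'a
  assumes "compact S"
    and "closure (interior S) = S"
    and "connected (interior S)"
    and "spindle_peak x S"
  shows "x \<in> spindle_kernel S \<and> spindle_starshaped S"
proof -
  have clS: "closed S" and bS: "bounded S" using assms(1) by (auto simp: compact_eq_bounded_closed)
  obtain U where U: "open U" "x \<in> U" "\<forall>x' \<in> U \<inter> S. spindle_star x' S \<subseteq> spindle_star x S"
    and xS: "x \<in> S"
    using assms(4) unfolding spindle_peak_def by blast
  obtain r where r: "r > 0" "ball x r \<subseteq> U" using U open_contains_ball by blast
  let ?T = "spindle_star x S"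
  have peak: "?T \<supseteq> spindle_star y S" if "y \<in> S" "dist x y < r" for y
  proof -
    have "y \<in> U \<inter> S" using r(2) that by (auto simp: subset_iff mem_ball)
    then show ?thesis using U(3) by blast
  qed
  have self: "y \<in> spindle_star y S" if "y \<in> S" for y
    using that by (simp add: spindle_star_def spindle_refl)
  have near: "y \<in> ?T" if "y \<in> S" "dist x y < r" for y
    using peak[OF that] self[OF that(1)] by blast
  have TS: "?T \<subseteq> S" by (auto simp: spindle_star_def)
  have Tcl: "closed ?T" by (rule star_closed[OF assms(1)])
  define A where "A = interior S \<inter> ?T"
  have openA: "open A" unfolding open_contains_ball
  proof
    fix z assume zA: "z \<in> A"
    then have zi: "z \<in> interior S" and zT: "z \<in> ?T" by (auto simp: A_def)
    show "\<exists>\<epsilon>>0. ball z \<epsilon> \<subseteq> A"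
    proof (cases "z = x")
      case True
      obtain e where e: "e > 0" "ball z e \<subseteq> interior S" using zi open_interior open_contains_ball by blast
      show ?thesis
      proof (intro exI conjI)
        show "min e r > 0" using e r by simp
        show "ball z (min e r) \<subseteq> A"
        proof
          fix z' assume "z' \<in> ball z (min e r)"
          then have "z' \<in> interior S" "dist x z' < r" using e True by (auto simp: mem_ball)
          then show "z' \<in> A" using near interior_subset by (auto simp: A_def)
        qed
      qed
    next
      case ne: False
      have nxz: "x \<noteq> z" using ne by auto
      have spxz: "spindle x z \<subseteq> S" using zT by (simp add: spindle_star_def)
      have d2: "dist x z \<le> 2" by (rule spindle_sub_dist[OF bS spxz])
      define s where "s = min (1/2) (r/8)"
      have s0: "0 < s" "s < 1" using r by (auto simp: s_def)
      define y where "y = (1-s) *\<^sub>R x + s *\<^sub>R z"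
      have "y - z = (1-s) *\<^sub>R (x - z)" by (simp add: y_def algebra_simps)
      then have "dist y z = (1-s) * dist x z" using s0 by (simp add: dist_norm)
      also have "\<dots> \<le> 1 * 2" using s0 d2 by (intro mult_mono) auto
      finally have dyz: "dist y z \<le> 2" by simp
      have "x - y = s *\<^sub>R (x - z)" by (simp add: y_def algebra_simps)
      then have "dist x y = s * dist x z" using s0 by (simp add: dist_norm)
      also have "\<dots> \<le> (r/8) * 2" using s0 d2 r by (intro mult_mono) (auto simp: s_def)
      finally have dxy: "dist x y \<le> r/4" by simp
      define K where "K = spindle y z"
      have Kint: "K \<subseteq> interior S"
      proof
        fix w assume w: "w \<in> K"
        show "w \<in> interior S"
        proof (cases "w = z")
          case True then show ?thesis using zi by simp
        next
          case False
          obtain \<delta> where "\<delta> > 0" "ball w \<delta> \<subseteq> spindle x z"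
            using spindle_inner_ball[OF nxz d2 s0, of w] w False by (auto simp: K_def y_def)
          then show ?thesis using spxz by (auto simp: mem_interior)
        qed
      qed
      have cK: "compact K"
      proof -
        have "K \<subseteq> S" using Kint interior_subset by blast
        then have "bounded K" using bS bounded_subset by blast
        then show ?thesis by (simp add: compact_eq_bounded_closed K_def spindle_closed)
      qed
      obtain d where d: "d > 0" "\<forall>w\<in>K. \<forall>u\<in>- interior S. d \<le> dist w u"
        using separate_compact_closed[OF cK, of "- interior S"] Kint by auto
      have dK: "u \<in> interior S" if "w \<in> K" "dist w u < d" for w u
        using d that by force
      show ?thesis
      proof (intro exI conjI)
        show "min d (r/2) > 0" using d r by simp
        show "ball z (min d (r/2)) \<subseteq> A"
        proof
          fix z' assume z': "z' \<in> ball z (min d (r/2))"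
          define v where "v = z' - z"
          have nv: "norm v < d" "norm v < r/2" using z' by (auto simp: v_def mem_ball dist_norm norm_minus_commute)
          have zK: "z \<in> K" "y \<in> K" using spindle_endpoints[OF dyz] by (auto simp: K_def)
          have z'i: "z' \<in> interior S" using dK[OF zK(1), of z'] nv by (simp add: v_def dist_norm norm_minus_commute)
          define y' where "y' = y + v"
          have y'S: "y' \<in> S" using dK[OF zK(2), of y'] nv interior_subset
            by (auto simp: y'_def dist_norm)
          have "dist x y' \<le> dist x y + dist y y'" by (rule dist_triangle)
          also have "dist y y' = norm v" by (simp add: y'_def dist_norm)
          finally have dxy': "dist x y' < r" using dxy nv r(1) by linarith
          have "spindle y' z' \<subseteq> S"
          proof
            fix w' assume "w' \<in> spindle y' z'"
            then have "w' \<in> spindle (y + v) (z + v)" by (simp add: y'_def v_def)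
            then have "w' - v \<in> K" unfolding K_def by (rule spindle_translate[OF _ dyz])
            moreover have "dist (w' - v) w' < d" using nv by (simp add: dist_norm)
            ultimately show "w' \<in> S" using dK interior_subset by blast
          qed
          then have "z' \<in> spindle_star y' S" using z'i interior_subset by (auto simp: spindle_star_def)
          then have "z' \<in> ?T" using peak[OF y'S dxy'] by blast
          then show "z' \<in> A" using z'i by (simp add: A_def)
        qed
      qed
    qed
  qed
  have Ane: "A \<noteq> {}"
  proof -
    have "x \<in> closure (interior S)" using assms(2) xS by simp
    then obtain z where z: "z \<in> interior S" "dist z x < r" using r closure_approachable by blast
    then have "z \<in> S" using interior_subset by blast
    then have "z \<in> ?T" using near z(2) by (simp add: dist_commute)
    then show ?thesis using z(1) by (auto simp: A_def)
  qed
  have "A = interior S"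
  proof -
    have "openin (top_of_set (interior S)) A" using openA by (intro open_subset) (auto simp: A_def)
    moreover have "closedin (top_of_set (interior S)) A" unfolding A_def by (rule closedin_closed_Int[OF Tcl])
    moreover have "\<forall>T. openin (top_of_set (interior S)) T \<and> closedin (top_of_set (interior S)) T \<longrightarrow> T = {} \<or> T = interior S"
      using assms(3) by (simp only: connected_clopen)
    ultimately have "A = {} \<or> A = interior S" by simp
    then show ?thesis using Ane by simp
  qed
  then have "interior S \<subseteq> ?T" by (auto simp: A_def)
  then have "closure (interior S) \<subseteq> ?T" using Tcl closure_minimal by blast
  then have "?T = S" using assms(2) TS by auto
  then have "x \<in> spindle_kernel S" using xS by (simp add: spindle_kernel_def)
  then show ?thesis by (auto simp: spindle_starshaped_def)
qed


end
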